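(* Let $\alpha: I\to M$ be a unit-speed curve on an oriented surface $M\subset E^3$ with Darboux frame $\{T,V,U\}$ and curvatures $k_g,k_n,\tau_g$, with $k_n(s)\neq 0$ for all $s\in I$. Let $c_2$ be a nonzero real constant, let $\chi$ be an antiderivative of $k_g\tau_g/k_n$ on $I$, and let $$\gamma(s)=\alpha(s)-c_2e^{\chi(s)}\Big(\frac{\tau_g(s)}{k_n(s)}T(s)-V(s)\Big),$$ and assume $\gamma$ is regular. Then $\gamma$ is a general helix if and only if $\alpha$ is a helical curve on $M$.
   Context: $M$ is an oriented surface in Euclidean 3-space $E^3$ and $\alpha:I\to M$ is a unit-speed curve with arc-length parameter $s$. Its Darboux frame $\{T,V,U\}$ consists of the unit tangent $T=\alpha'$, the unit surface normal $U$ of $M$ along $\alpha$, and $V=U\times T$; it satisfies $T'=k_gV+k_nU$, $V'=-k_gT+\tau_gU$, $U'=-k_nT-\tau_gV$, where $k_g,k_n,\tau_g$ are the geodesic curvature, normal curvature and geodesic torsion. A regular curve is a general helix if its unit tangent makes a constant angle with a fixed direction. $\alpha$ is a helical curve on $M$ if $\langle T,d\rangle$ is constant for some fixed unit vector $d$. *)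

theory Defs
  imports "HOL-Analysis.Analysis" "HOL-Analysis.Cross3"
begin

definition regular_curve :: "real set \<Rightarrow> (real \<Rightarrow> real^3) \<Rightarrow> bool" where
  "regular_curve I g \<longleftrightarrow>
     (\<forall>s\<in>I. g differentiable (at s) \<and> vector_derivative g (at s) \<noteq> 0)"

definition general_helix :: "real set \<Rightarrow> (real \<Rightarrow> real^3) \<Rightarrow> bool" where
  "general_helix I g \<longleftrightarrow> regular_curve I g \<and>
     (\<exists>d::real^3. \<exists>c::real. norm d = 1 \<and>
        (\<forall>s\<in>I. ((1 / norm (vector_derivative g (at s))) *\<^sub>R vector_derivative g (at s)) \<bullet> d = c))"

definition helical_curve :: "real set \<Rightarrow> (real \<Rightarrow> real^3) \<Rightarrow> bool" where
  "helical_curve I T \<longleftrightarrow> (\<exists>d::real^3. \<exists>c::real. norm d = 1 \<and> (\<forall>s\<in>I. T s \<bullet> d = c))"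

definition darboux_frame ::
  "real set \<Rightarrow> (real \<Rightarrow> real^3) \<Rightarrow> (real \<Rightarrow> real^3) \<Rightarrow> (real \<Rightarrow> real^3) \<Rightarrow> (real \<Rightarrow> real^3)
   \<Rightarrow> (real \<Rightarrow> real) \<Rightarrow> (real \<Rightarrow> real) \<Rightarrow> (real \<Rightarrow> real) \<Rightarrow> bool" where
  "darboux_frame I \<alpha> T V U kg kn tg \<longleftrightarrow>
     (\<forall>s\<in>I.
        (\<alpha> has_vector_derivative T s) (at s) \<and> norm (T s) = 1 \<and>
        norm (U s) = 1 \<and> U s \<bullet> T s = 0 \<and> V s = cross3 (U s) (T s) \<and>
        (T has_vector_derivative (kg s *\<^sub>R V s + kn s *\<^sub>R U s)) (at s) \<and>
        (V has_vector_derivative (- kg s *\<^sub>R T s + tg s *\<^sub>R U s)) (at s) \<and>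
        (U has_vector_derivative (- kn s *\<^sub>R T s - tg s *\<^sub>R V s)) (at s))"

end

theory Submission
  imports Defs
begin

lemma vd_inner:
  fixes f g :: "real \<Rightarrow> 'a::real_inner"
  assumes "(f has_vector_derivative f') (at s)" "(g has_vector_derivative g') (at s)"
  shows "((\<lambda>x. f x \<bullet> g x) has_real_derivative (f' \<bullet> g s + f s \<bullet> g')) (at s)"
proof -
  have "((\<lambda>x. f x \<bullet> g x) has_derivative (\<lambda>h. f s \<bullet> (h *\<^sub>R g') + (h *\<^sub>R f') \<bullet> g s)) (at s)"
    using assms unfolding has_vector_derivative_def by (intro has_derivative_inner) auto
  then show ?thesis unfolding has_field_derivative_def
    by (rule has_derivative_eq_rhs) (auto simp: fun_eq_iff algebra_simps)
qed

lemma no_sign_change: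
  fixes h h' :: "real \<Rightarrow> real"
  assumes ab: "a < b" and der: "\<And>x. x \<in> {a..b} \<Longrightarrow> (h has_real_derivative h' x) (at x)"
    and pa: "h' a > 0" and nb: "h' b < 0"
  shows "\<exists>z. a < z \<and> z < b \<and> h' z = 0"
proof -
  have cont: "continuous_on {a..b} h"
    using der by (meson DERIV_isCont continuous_at_imp_continuous_on)
  obtain z where z: "z \<in> {a..b}" "\<And>y. y \<in> {a..b} \<Longrightarrow> h y \<le> h z"
    using continuous_attains_sup[OF compact_Icc _ cont] ab by fastforce
  obtain d1 where d1: "d1 > 0" "\<And>t. t > 0 \<Longrightarrow> t < d1 \<Longrightarrow> h a < h (a + t)"
    using DERIV_pos_inc_right[OF der[of a] pa] ab by auto
  obtain d2 where d2: "d2 > 0" "\<And>t. t > 0 \<Longrightarrow> t < d2 \<Longrightarrow> h b < h (b - t)"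
    using DERIV_neg_dec_left[OF der[of b] nb] ab by auto
  have "z \<noteq> a"
  proof
    assume "z = a"
    let ?t = "min (d1/2) (b - a)"
    have "h a < h (a + ?t)" using d1 ab by auto
    moreover have "h (a + ?t) \<le> h z" using z(2)[of "a + ?t"] ab d1 by auto
    ultimately show False using \<open>z = a\<close> by simp
  qed
  moreover have "z \<noteq> b"
  proof
    assume "z = b"
    let ?t = "min (d2/2) (b - a)"
    have "h b < h (b - ?t)" using d2 ab by auto
    moreover have "h (b - ?t) \<le> h z" using z(2)[of "b - ?t"] ab d2 by auto
    ultimately show False using \<open>z = b\<close> by simp
  qed
  ultimately have zi: "a < z" "z < b" using z(1) by auto
  have "h' z = 0"
  proof (rule DERIV_local_max[OF der[of z]])
    show "z \<in> {a..b}" using zi by auto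
    show "0 < min (z - a) (b - z)" using zi by auto
    show "\<forall>y. \<bar>z - y\<bar> < min (z - a) (b - z) \<longrightarrow> h y \<le> h z"
      using z(2) by (auto simp: abs_less_iff)
  qed
  then show ?thesis using zi by blast
qed

lemma deriv_sign_const:
  fixes h h' :: "real \<Rightarrow> real"
  assumes J: "is_interval J" and der: "\<And>x. x \<in> J \<Longrightarrow> (h has_real_derivative h' x) (at x)"
    and nz: "\<And>x. x \<in> J \<Longrightarrow> h' x \<noteq> 0"
  shows "(\<forall>x\<in>J. h' x > 0) \<or> (\<forall>x\<in>J. h' x < 0)"
proof (rule ccontr)
  assume A: "\<not> ?thesis"
  then obtain y where y: "y \<in> J" "\<not> h' y > 0" by blast
  from A obtain x where x: "x \<in> J" "\<not> h' x < 0" by blast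
  have xy: "h' x > 0" "h' y < 0" using x y nz[of x] nz[of y] by linarith+
  have iv: "\<And>a b t. a \<in> J \<Longrightarrow> b \<in> J \<Longrightarrow> a \<le> t \<Longrightarrow> t \<le> b \<Longrightarrow> t \<in> J"
    using J unfolding is_interval_1 by blast
  show False
  proof (cases "x < y")
    case True
    have "\<And>t. t \<in> {x..y} \<Longrightarrow> (h has_real_derivative h' t) (at t)"
      using der iv[OF x(1) y(1)] by simp
    then obtain z where z: "x < z" "z < y" "h' z = 0"
      using no_sign_change[of x y h h'] True xy by blast
    then show False using nz[of z] iv[OF x(1) y(1), of z] by simp
  next
    case False
    then have yx: "y < x" using xy by (cases "x = y") auto
    have "\<And>t. t \<in> {y..x} \<Longrightarrow> ((\<lambda>t. - h t) has_real_derivative - h' t) (at t)"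
      using der iv[OF y(1) x(1)] by (simp add: DERIV_minus)
    then obtain z where z: "y < z" "z < x" "- h' z = 0"
      using no_sign_change[of y x "\<lambda>t. - h t" "\<lambda>t. - h' t"] yx xy by auto
    then show False using nz[of z] iv[OF y(1) x(1), of z] by simp
  qed
qed

lemma gamma_deriv:
  fixes I :: "real set" and \<alpha> T V U \<gamma> :: "real \<Rightarrow> real^3"
    and kg kn tg chi :: "real \<Rightarrow> real" and c2 :: real
  assumes oI: "open I"
    and frame: "darboux_frame I \<alpha> T V U kg kn tg"
    and kn: "\<forall>s\<in>I. kn s \<noteq> 0"
    and chi: "\<forall>s\<in>I. (chi has_real_derivative (kg s * tg s / kn s)) (at s)"
    and gamma: "\<forall>s\<in>I. \<gamma> s = \<alpha> s - (c2 * exp (chi s)) *\<^sub>R ((tg s / kn s) *\<^sub>R T s - V s)"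
    and reg: "regular_curve I \<gamma>"
    and s: "s \<in> I"
  shows "\<exists>l. l \<noteq> 0 \<and> vector_derivative \<gamma> (at s) = l *\<^sub>R T s"
proof -
  define g where "g x = c2 * exp (chi x)" for x
  define f where "f x = tg x / kn x" for x
  define p where "p x = g x * f x" for x
  define \<gamma>' where "\<gamma>' = vector_derivative \<gamma> (at s)"
  have fr: "\<And>x. x \<in> I \<Longrightarrow> (\<alpha> has_vector_derivative T x) (at x) \<and> norm (T x) = 1 \<and>
        norm (U x) = 1 \<and> U x \<bullet> T x = 0 \<and> V x = cross3 (U x) (T x) \<and>
        (T has_vector_derivative (kg x *\<^sub>R V x + kn x *\<^sub>R U x)) (at x) \<and>
        (V has_vector_derivative (- kg x *\<^sub>R T x + tg x *\<^sub>R U x)) (at x)"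
    using frame unfolding darboux_frame_def by blast
  have dg: "(\<gamma> has_vector_derivative \<gamma>') (at s)"
    using reg s unfolding regular_curve_def \<gamma>'_def by (simp add: vector_derivative_works)
  have nz: "\<gamma>' \<noteq> 0" using reg s unfolding regular_curve_def \<gamma>'_def by simp
  have dgg: "(g has_real_derivative g s * (kg s * tg s / kn s)) (at s)"
    unfolding g_def using chi s by (auto intro!: derivative_eq_intros)
  have TT: "\<And>x. x \<in> I \<Longrightarrow> T x \<bullet> T x = 1"
    using fr by (simp add: dot_square_norm)
  have VT: "\<And>x. x \<in> I \<Longrightarrow> V x \<bullet> T x = 0"
    using fr by (simp add: dot_cross_self)
  obtain pd where dP: "((\<lambda>x. (\<alpha> x - \<gamma> x) \<bullet> T x) has_real_derivative pd) (at s)"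
    using vd_inner[OF has_vector_derivative_diff[OF conjunct1[OF fr[OF s]] dg] conjunct1[OF conjunct2[OF conjunct2[OF conjunct2[OF conjunct2[OF conjunct2[OF fr[OF s]]]]]]]]
    by blast
  have eqP: "(\<alpha> x - \<gamma> x) \<bullet> T x = p x" if "x \<in> I" for x
    using gamma that TT[OF that] VT[OF that]
    by (simp add: p_def g_def f_def inner_diff_left)
  have dp: "(p has_real_derivative pd) (at s)"
    using has_field_derivative_transform_within_open[OF dP oI s] eqP by blast
  have dW: "((\<lambda>x. p x *\<^sub>R T x - g x *\<^sub>R V x) has_vector_derivative
     (p s *\<^sub>R (kg s *\<^sub>R V s + kn s *\<^sub>R U s) + pd *\<^sub>R T s
      - (g s *\<^sub>R (- kg s *\<^sub>R T s + tg s *\<^sub>R U s) + (g s * (kg s * tg s / kn s)) *\<^sub>R V s))) (at s)"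
    using fr[OF s] dp dgg by (intro has_vector_derivative_diff has_vector_derivative_scaleR) auto
  have dG: "((\<lambda>x. \<alpha> x - (p x *\<^sub>R T x - g x *\<^sub>R V x)) has_vector_derivative
     (T s - (p s *\<^sub>R (kg s *\<^sub>R V s + kn s *\<^sub>R U s) + pd *\<^sub>R T s
      - (g s *\<^sub>R (- kg s *\<^sub>R T s + tg s *\<^sub>R U s) + (g s * (kg s * tg s / kn s)) *\<^sub>R V s)))) (at s)"
    by (rule has_vector_derivative_diff[OF conjunct1[OF fr[OF s]] dW])
  have eqG: "\<alpha> x - (p x *\<^sub>R T x - g x *\<^sub>R V x) = \<gamma> x" if "x \<in> I" for x
    using gamma that by (simp add: p_def g_def f_def algebra_simps)
  note dG2 = has_vector_derivative_transform_within_open[OF dG oI s eqG]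
  have e1: "p s * kn s = g s * tg s" using kn s by (simp add: p_def f_def)
  have e2: "g s * (kg s * tg s / kn s) = p s * kg s" by (simp add: p_def f_def)
  have "\<gamma>' = T s - (p s *\<^sub>R (kg s *\<^sub>R V s + kn s *\<^sub>R U s) + pd *\<^sub>R T s
      - (g s *\<^sub>R (- kg s *\<^sub>R T s + tg s *\<^sub>R U s) + (g s * (kg s * tg s / kn s)) *\<^sub>R V s))"
    using vector_derivative_unique_at[OF dg dG2] .
  also have "\<dots> = (1 - pd - g s * kg s) *\<^sub>R T s"
    unfolding e2 using e1 by (simp add: algebra_simps scaleR_add_right)
  finally have "\<gamma>' = (1 - pd - g s * kg s) *\<^sub>R T s" .
  then show ?thesis using nz unfolding \<gamma>'_def by (metis scaleR_zero_left)
qed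

theorem theorem3p9:
  fixes I :: "real set" and M :: "(real^3) set" and N :: "real^3 \<Rightarrow> real^3"
    and \<alpha> T V U \<gamma> :: "real \<Rightarrow> real^3"
    and kg kn tg chi :: "real \<Rightarrow> real" and c2 :: real
  assumes I: "is_interval I" "open I" "I \<noteq> {}"
    and surf: "\<forall>s\<in>I. \<alpha> s \<in> M" "continuous_on M N" "\<forall>p\<in>M. norm (N p) = 1"
              "\<forall>s\<in>I. U s = N (\<alpha> s)"
    and frame: "darboux_frame I \<alpha> T V U kg kn tg"
    and kn: "\<forall>s\<in>I. kn s \<noteq> 0"
    and c2: "c2 \<noteq> 0"
    and chi: "\<forall>s\<in>I. (chi has_real_derivative (kg s * tg s / kn s)) (at s)"
    and gamma: "\<forall>s\<in>I. \<gamma> s = \<alpha> s - (c2 * exp (chi s)) *\<^sub>R ((tg s / kn s) *\<^sub>R T s - V s)"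
    and reg: "regular_curve I \<gamma>"
  shows "general_helix I \<gamma> \<longleftrightarrow> helical_curve I T"
proof -
  have "\<forall>s\<in>I. \<exists>l. l \<noteq> 0 \<and> vector_derivative \<gamma> (at s) = l *\<^sub>R T s"
    using gamma_deriv[OF I(2) frame kn chi gamma reg] by blast
  then obtain lam where lam0: "\<forall>s\<in>I. lam s \<noteq> 0 \<and> vector_derivative \<gamma> (at s) = lam s *\<^sub>R T s"
    by (auto dest!: bchoice)
  then have lam: "\<And>s. s \<in> I \<Longrightarrow> lam s \<noteq> 0 \<and> vector_derivative \<gamma> (at s) = lam s *\<^sub>R T s"
    by blast
  have fr: "\<And>x. x \<in> I \<Longrightarrow> norm (T x) = 1 \<and>
        (T has_vector_derivative (kg x *\<^sub>R V x + kn x *\<^sub>R U x)) (at x)"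
    using frame unfolding darboux_frame_def by blast
  have ut: "((1 / norm (vector_derivative \<gamma> (at s))) *\<^sub>R vector_derivative \<gamma> (at s)) \<bullet> d
      = (lam s / \<bar>lam s\<bar>) * (T s \<bullet> d)" if "s \<in> I" for s d
    using lam[OF that] fr[OF that] by simp
  have contT: "continuous_on I T"
    using fr by (intro continuous_at_imp_continuous_on ballI has_vector_derivative_continuous) blast
  show ?thesis
  proof
    assume "general_helix I \<gamma>"
    then obtain d c where d: "norm d = 1" and dc0: "\<And>s. s \<in> I \<Longrightarrow> ((1 / norm (vector_derivative \<gamma> (at s))) *\<^sub>R vector_derivative \<gamma> (at s)) \<bullet> d = c"
      unfolding general_helix_def by blast
    have dc: "\<And>s. s \<in> I \<Longrightarrow> (lam s / \<bar>lam s\<bar>) * (T s \<bullet> d) = c"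
      using dc0 ut by simp
    have pm: "T s \<bullet> d = c \<or> T s \<bullet> d = - c" if "s \<in> I" for s
      using dc[OF that] lam[OF that] by (cases "lam s > 0") auto
    have "(\<lambda>s. T s \<bullet> d) constant_on I"
    proof (rule continuous_discrete_range_constant)
      show "connected I" using I(1) by (simp add: is_interval_connected)
      show "continuous_on I (\<lambda>s. T s \<bullet> d)" using contT by (intro continuous_intros)
      fix x assume x: "x \<in> I"
      show "\<exists>e>0. \<forall>y. y \<in> I \<and> T y \<bullet> d \<noteq> T x \<bullet> d \<longrightarrow> e \<le> norm (T y \<bullet> d - T x \<bullet> d)"
      proof (cases "c = 0")
        case True then show ?thesis using pm x by (intro exI[of _ 1]) auto
      next
        case False
        show ?thesis
        proof (intro exI[of _ "2 * \<bar>c\<bar>"] conjI allI impI)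
          show "0 < 2 * \<bar>c\<bar>" using False by simp
          fix y assume "y \<in> I \<and> T y \<bullet> d \<noteq> T x \<bullet> d"
          then show "2 * \<bar>c\<bar> \<le> norm (T y \<bullet> d - T x \<bullet> d)"
            using pm[of y] pm[OF x] False by auto
        qed
      qed
    qed
    then show "helical_curve I T" unfolding helical_curve_def constant_on_def using d by blast
  next
    assume "helical_curve I T"
    then obtain d c where d: "norm d = 1" and dc: "\<And>s. s \<in> I \<Longrightarrow> T s \<bullet> d = c"
      unfolding helical_curve_def by blast
    show "general_helix I \<gamma>"
      unfolding general_helix_def
    proof (intro conjI reg)
      show "\<exists>d c. norm d = 1 \<and> (\<forall>s\<in>I. ((1 / norm (vector_derivative \<gamma> (at s))) *\<^sub>R vector_derivative \<gamma> (at s)) \<bullet> d = c)"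
      proof (cases "c = 0")
        case True then show ?thesis using d ut dc by (intro exI[of _ d] exI[of _ 0]) auto
      next
        case False
        have der: "((\<lambda>x. \<gamma> x \<bullet> d) has_real_derivative lam s * c) (at s)" if "s \<in> I" for s
        proof -
          have "(\<gamma> has_vector_derivative vector_derivative \<gamma> (at s)) (at s)"
            using reg that unfolding regular_curve_def by (simp add: vector_derivative_works)
          from vd_inner[OF this has_vector_derivative_const[of d]]
          show ?thesis using lam[OF that] dc[OF that] by simp
        qed
        have "(\<forall>x\<in>I. lam x * c > 0) \<or> (\<forall>x\<in>I. lam x * c < 0)"
          by (rule deriv_sign_const[OF I(1) der]) (use lam False in auto)
        then show ?thesis
        proof
          assume pos: "\<forall>x\<in>I. lam x * c > 0"
          show ?thesis
          proof (intro exI[of _ d] exI[of _ "sgn c * c"] conjI ballI)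
            fix s assume s: "s \<in> I"
            have "lam s / \<bar>lam s\<bar> = sgn c" using pos s lam[OF s]
              by (cases "c > 0"; cases "lam s > 0") (auto simp: zero_less_mult_iff)
            then show "((1 / norm (vector_derivative \<gamma> (at s))) *\<^sub>R vector_derivative \<gamma> (at s)) \<bullet> d = sgn c * c"
              using ut[OF s] dc[OF s] by simp
          qed (rule d)
        next
          assume neg: "\<forall>x\<in>I. lam x * c < 0"
          show ?thesis
          proof (intro exI[of _ d] exI[of _ "- sgn c * c"] conjI ballI)
            fix s assume s: "s \<in> I"
            have "lam s / \<bar>lam s\<bar> = - sgn c" using neg s lam[OF s]
              by (cases "c > 0"; cases "lam s > 0") (auto simp: mult_less_0_iff)
            then show "((1 / norm (vector_derivative \<gamma> (at s))) *\<^sub>R vector_derivative \<gamma> (at s)) \<bullet> d = - sgn c * c"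
              using ut[OF s] dc[OF s] by simp
          qed (rule d)
        qed
      qed
    qed
  qed
qed

end
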